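(* Let $\mathbb R^d$ be endowed with the Euclidean norm $\|\cdot\|$ and denote by $|K|$ the Lebesgue measure of a Borel set $K\subset\mathbb R^d$. Let $A$ be a $d\times d$ real matrix which is unipotent, i.e. $(\mathrm{id}-A)^d=0$. For every integer $n\geq 2$, let $$\mathcal W_n=\{\xi\in\mathbb R^d: \|A^k\xi\|\leq 1\text{ for }1\leq k<n\}.$$ Let $p=\sum_{k=1}^{d-1}\dim\bigl(\mathrm{range}((\mathrm{id}-A)^k)\bigr)$. Then there exist positive constants $C$ and $C'$ (depending on $d$ and $A$) such that $$Cn^{-p}\leq |\mathcal W_n|\leq C'n^{-p}$$ for every $n\geq 2$. *)

theory Defs
  imports "HOL-Analysis.Analysis"
begin

fun matpow :: "real^'n^'n \<Rightarrow> nat \<Rightarrow> real^'n^'n" where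
  "matpow A 0 = mat 1"
| "matpow A (Suc k) = A ** matpow A k"

definition W_set :: "real^'n^'n \<Rightarrow> nat \<Rightarrow> (real^'n) set" where
  "W_set A n = {\<xi>. \<forall>k. 1 \<le> k \<and> k < n \<longrightarrow> norm (matpow A k *v \<xi>) \<le> 1}"

end

theory Submission
  imports Defs "HOL-Computational_Algebra.Polynomial"
begin

lemma matpow_vec: "matpow A k *v x = ((*v) A ^^ k) x"
  by (induction k arbitrary: x) (auto simp: matrix_vector_mul_assoc[symmetric])

lemma matpow_add_vec: "matpow A (i + j) *v x = matpow A i *v (matpow A j *v x)"
  by (simp add: matpow_vec funpow_add)

lemma matpow_Suc_vec: "matpow A (Suc k) *v x = matpow A k *v (A *v x)"
  using matpow_add_vec[of A k 1 x] by (simp add: matpow_vec)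

lemma matpow_zero_ge:
  assumes "matpow N d = 0" "d \<le> j"
  shows "matpow N j *v x = 0"
proof -
  have "matpow N j *v x = matpow N (j - d) *v (matpow N d *v x)"
    using matpow_add_vec[of N "j-d" d x] assms by simp
  then show ?thesis using assms by simp
qed

lemma mv_sum: "(A::real^'n^'m) *v (\<Sum>i\<in>S. f i) = (\<Sum>i\<in>S. A *v f i)"
  by (rule linear_sum[OF matrix_vector_mul_linear])

lemma binom_expand:
  "matpow (mat 1 - N) k *v x = (\<Sum>j\<le>k. ((-1)^j * real (k choose j)) *\<^sub>R (matpow N j *v x))"
proof (induction k)
  case 0 then show ?case by simp
next
  case (Suc k)
  have "matpow (mat 1 - N) (Suc k) *v x = (mat 1 - N) *v (matpow (mat 1 - N) k *v x)"
    by (simp add: matrix_vector_mul_assoc[symmetric])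
  also have "\<dots> = (\<Sum>j\<le>k. ((-1)^j * real (k choose j)) *\<^sub>R (matpow N j *v x))
        - (\<Sum>j\<le>k. ((-1)^j * real (k choose j)) *\<^sub>R (matpow N (Suc j) *v x))"
    by (simp add: Suc matrix_vector_mult_diff_rdistrib mv_sum matrix_vector_mult_scaleR
          matrix_vector_mul_assoc[symmetric] scaleR_diff_right sum_subtractf)
  also have "\<dots> = (\<Sum>j\<le>Suc k. ((-1)^j * real (Suc k choose j)) *\<^sub>R (matpow N j *v x))"
  proof -
    have e1: "(\<Sum>j\<le>Suc k. ((-1)^j * real (Suc k choose j)) *\<^sub>R (matpow N j *v x))
      = x + (\<Sum>j\<le>k. ((-1)^(Suc j) * real (Suc k choose Suc j)) *\<^sub>R (matpow N (Suc j) *v x))"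
      by (subst sum.atMost_Suc_shift) simp
    have e2: "(\<Sum>j\<le>k. ((-1)^j * real (k choose j)) *\<^sub>R (matpow N j *v x))
       = x + (\<Sum>j<k. ((-1)^(Suc j) * real (k choose Suc j)) *\<^sub>R (matpow N (Suc j) *v x))"
      by (simp only: lessThan_Suc_atMost[symmetric] sum.lessThan_Suc_shift) simp
    have e3: "(\<Sum>j<k. ((-1)^(Suc j) * real (k choose Suc j)) *\<^sub>R (matpow N (Suc j) *v x))
       = (\<Sum>j\<le>k. ((-1)^(Suc j) * real (k choose Suc j)) *\<^sub>R (matpow N (Suc j) *v x))"
      by (simp add: lessThan_Suc_atMost[symmetric])
    show ?thesis unfolding e1 e2 e3
      by (simp add: algebra_simps sum_subtractf[symmetric] scaleR_diff_left[symmetric] sum.distrib[symmetric])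
  qed
  finally show ?case .
qed

lemma lagrange_bound:
  fixes t :: "nat \<Rightarrow> real"
  assumes inj: "inj_on t {..<d}"
  shows "\<exists>Gm\<ge>0. \<forall>q. degree q < d \<longrightarrow> (\<forall>j. \<bar>coeff q j\<bar> \<le> Gm * (\<Sum>i<d. \<bar>poly q (t i)\<bar>))"
proof -
  define lg where "lg i = smult (1 / (\<Prod>l\<in>{..<d}-{i}. (t i - t l))) (\<Prod>l\<in>{..<d}-{i}. [:- t l, 1:])" for i
  have lval: "poly (lg i) (t m) = (if m = i then 1 else 0)" if "i < d" "m < d" for i m
  proof (cases "m = i")
    case True
    have "(\<Prod>l\<in>{..<d}-{i}. (t i - t l)) \<noteq> 0"
      using inj that by (auto simp: inj_on_def)
    then show ?thesis using True by (simp add: lg_def poly_prod)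
  next
    case False
    have "(\<Prod>l\<in>{..<d}-{i}. poly [:- t l, 1:] (t m)) = 0"
      using False that by (intro prod_zero) auto
    then show ?thesis using False by (simp add: lg_def poly_prod)
  qed
  have ldeg: "degree (lg i) < d" if "i < d" for i
  proof -
    have "degree (lg i) \<le> degree (\<Prod>l\<in>{..<d}-{i}. [:- t l, 1:])"
      unfolding lg_def by (rule degree_smult_le)
    also have "\<dots> \<le> sum (degree \<circ> (\<lambda>l. [:- t l, 1:])) ({..<d}-{i})"
      by (rule degree_prod_sum_le) simp
    also have "\<dots> = card ({..<d}-{i})" by simp
    also have "\<dots> < d" using that by simp
    finally show ?thesis .
  qed
  define Gm where "Gm = (\<Sum>i<d. \<Sum>j<d. \<bar>coeff (lg i) j\<bar>)"
  have cl: "\<bar>coeff (lg i) j\<bar> \<le> Gm" if "i < d" for i j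
  proof (cases "j < d")
    case True
    have "\<bar>coeff (lg i) j\<bar> \<le> (\<Sum>j<d. \<bar>coeff (lg i) j\<bar>)"
      using True by (intro member_le_sum) auto
    also have "\<dots> \<le> Gm" unfolding Gm_def using that
      by (intro member_le_sum[where f="\<lambda>i. \<Sum>j<d. \<bar>coeff (lg i) j\<bar>"]) (auto intro: sum_nonneg)
    finally show ?thesis .
  next
    case False
    then have "coeff (lg i) j = 0" using ldeg[OF that] by (intro coeff_eq_0) simp
    then show ?thesis unfolding Gm_def by (auto intro!: sum_nonneg)
  qed
  have G0: "Gm \<ge> 0" unfolding Gm_def by (auto intro!: sum_nonneg)
  have main: "\<bar>coeff q j\<bar> \<le> Gm * (\<Sum>i<d. \<bar>poly q (t i)\<bar>)" if dq: "degree q < d" for q j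
  proof -
    define r where "r = (\<Sum>i<d. smult (poly q (t i)) (lg i))"
    have "q = r"
    proof (rule poly_eqI_degree[where A="t ` {..<d}"])
      fix x assume "x \<in> t ` {..<d}"
      then obtain m where m: "m < d" "x = t m" by auto
      have "poly r x = (\<Sum>i<d. poly q (t i) * (if m = i then 1 else 0))"
        unfolding r_def poly_sum using m lval by (auto intro!: sum.cong)
      also have "\<dots> = poly q x" using m by (simp add: if_distrib[of "\<lambda>z. _ * z"] sum.delta cong: if_cong)
      finally show "poly q x = poly r x" by simp
    next
      show "degree q < card (t ` {..<d})" using dq card_image[OF inj] by simp
      have "degree r < d"
      proof -
        have "d > 0" using dq by simp
        have "degree r \<le> d - 1" unfolding r_def
        proof (rule degree_sum_le)
          fix p assume "p \<in> {..<d}"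
          then have "degree (lg p) < d" using ldeg by simp
          then show "degree (smult (poly q (t p)) (lg p)) \<le> d - 1"
            using degree_smult_le[of "poly q (t p)" "lg p"] by linarith
        qed simp
        then show ?thesis using \<open>d > 0\<close> by simp
      qed
      then show "degree r < card (t ` {..<d})" using card_image[OF inj] by simp
    qed
    then have "coeff q j = coeff r j" by simp
    also have "\<dots> = (\<Sum>i<d. poly q (t i) * coeff (lg i) j)"
      by (simp add: r_def coeff_sum)
    also have "\<bar>\<dots>\<bar> \<le> (\<Sum>i<d. \<bar>poly q (t i)\<bar> * Gm)"
      by (rule order.trans[OF sum_abs]) (auto simp: abs_mult intro!: sum_mono mult_left_mono cl)
    finally show ?thesis by (simp add: sum_distrib_left mult.commute)
  qed
  show ?thesis using G0 main by blast
qed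

lemma binom_prod: "real (k choose j) = (\<Prod>i<j. real k - real i) / fact j"
proof -
  have "real (k choose j) = (real k gchoose j)" by (rule binomial_gbinomial)
  also have "\<dots> = (\<Prod>i=0..<j. real k - real i) / fact j" by (simp add: gbinomial_prod_rev)
  finally show ?thesis by (simp add: atLeast0LessThan)
qed

lemma prod_shift_close:
  fixes x :: real
  assumes "0 \<le> x" "x \<le> 1" "j \<le> n" "n > 0"
  shows "\<bar>(\<Prod>i<j. x - real i / real n) - x ^ j\<bar> \<le> real j * real j / real n"
proof -
  have b: "\<bar>x - real i / real n\<bar> \<le> 1" if "i < j" for i
  proof -
    have "real i / real n \<le> 1" using that assms by (simp add: field_simps)
    moreover have "0 \<le> real i / real n" by simp
    ultimately show ?thesis using assms by linarith
  qed
  have "\<bar>(\<Prod>i<j. x - real i / real n) - (\<Prod>i<j. x)\<bar> \<le> (\<Sum>i<j. \<bar>(x - real i / real n) - x\<bar>)"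
    using norm_prod_diff[of "{..<j}" "\<lambda>i. x - real i / real n" "\<lambda>i. x"] assms b
    by (simp only: real_norm_def) auto
  also have "\<dots> \<le> (\<Sum>i<j. real j / real n)"
    using assms by (intro sum_mono) (auto simp: field_simps)
  finally show ?thesis by simp
qed

lemma pow_lip:
  fixes x y :: real
  assumes "0 \<le> x" "x \<le> 1" "0 \<le> y" "y \<le> 1"
  shows "\<bar>x ^ j - y ^ j\<bar> \<le> real j * \<bar>x - y\<bar>"
proof -
  have "\<bar>(\<Prod>i<j. x) - (\<Prod>i<j. y)\<bar> \<le> (\<Sum>i<j. \<bar>x - y\<bar>)"
    using norm_prod_diff[of "{..<j}" "\<lambda>i. x" "\<lambda>i. y"] assms by auto
  then show ?thesis by simp
qed

lemma div_ge1_le: "(x::real) \<ge> 0 \<Longrightarrow> f \<ge> 1 \<Longrightarrow> x / f \<le> x"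
  by (simp add: divide_le_eq mult_le_cancel_left1)


lemma poly_sample_bound:
  fixes d :: nat
  shows "\<exists>K n0. \<forall>n\<ge>n0. \<forall>v::nat\<Rightarrow>real.
     (\<forall>k. 1 \<le> k \<and> k < n \<longrightarrow> \<bar>\<Sum>j<d. real (k choose j) * v j\<bar> \<le> 1) \<longrightarrow>
     (\<forall>j<d. \<bar>v j\<bar> \<le> K / real n ^ j)"
proof (cases "d = 0")
  case True then show ?thesis by auto
next
  case dpos: False
  define t where "t i = real (i+1) / real (d+1)" for i
  have inj: "inj_on t {..<d}" by (auto simp: inj_on_def t_def field_simps)
  obtain Gm where Gm0: "Gm \<ge> 0" and lag: "\<And>q j. degree q < d \<Longrightarrow> \<bar>coeff q j\<bar> \<le> Gm * (\<Sum>i<d. \<bar>poly q (t i)\<bar>)"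
    using lagrange_bound[OF inj] by blast
  define M where "M = real d * fact d * Gm * real d"
  define c where "c = real d ^ 2 + real d"
  define n0 where "n0 = 2*(d+1) + nat \<lceil>2*M*c\<rceil>"
  have M0: "M \<ge> 0" using Gm0 by (simp add: M_def)
  have c0: "c \<ge> 0" by (simp add: c_def)
  show ?thesis
  proof (intro exI allI impI)
    fix n v j
    assume nn0: "n0 \<le> n" and H: "\<forall>k. 1 \<le> k \<and> k < n \<longrightarrow> \<bar>\<Sum>j<d. real (k choose j) * v j\<bar> \<le> 1"
      and jd: "j < d"
    have n1: "2*(d+1) \<le> n" using nn0 by (simp add: n0_def)
    have npos: "real n > 0" using n1 by simp
    have n2: "2*M*c \<le> real n"
    proof -
      have "2*M*c \<le> real (nat \<lceil>2*M*c\<rceil>)" by linarith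
      also have "\<dots> \<le> real n"
      proof -
        have "nat \<lceil>2*M*c\<rceil> \<le> n" using nn0 unfolding n0_def by linarith
        then show ?thesis by (rule of_nat_mono)
      qed
      finally show ?thesis .
    qed
    define u where "u j = real n ^ j * v j" for j
    define S where "S = (\<Sum>j<d. \<bar>u j\<bar>)"
    have S0: "S \<ge> 0" by (simp add: S_def sum_nonneg)
    define F where "F = (\<Sum>j<d. monom (u j / fact j) j)"
    have polyF: "poly F x = (\<Sum>j<d. u j / fact j * x ^ j)" for x
      by (simp add: F_def poly_sum poly_monom)
    have coeffF: "coeff F j = u j / fact j" if "j < d" for j
      using that by (simp add: F_def coeff_sum coeff_monom)
    have degF: "degree F < d"
    proof -
      have "degree F \<le> d - 1" unfolding F_def
      proof (rule degree_sum_le)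
        fix p assume "p \<in> {..<d}"
        then show "degree (monom (u p / fact p) p) \<le> d - 1"
          using degree_monom_le[of "u p / fact p" p] by simp
      qed simp
      then show ?thesis using dpos by simp
    qed
    have approx: "\<bar>(\<Sum>j<d. real (k choose j) * v j) - poly F (real k / real n)\<bar> \<le> S * (real d ^ 2 / real n)"
      if "k \<le> n" for k
    proof -
      have x0: "0 \<le> real k / real n" and x1: "real k / real n \<le> 1" using that npos by (auto simp: field_simps)
      have eq: "real (k choose j) * v j = u j / fact j * (\<Prod>i<j. real k / real n - real i / real n)"
        if "j < d" for j
      proof -
        have "(\<Prod>i<j. real k / real n - real i / real n) = (\<Prod>i<j. real k - real i) / real n ^ j"
          by (simp add: diff_divide_distrib[symmetric] prod_dividef)
        moreover have "(real n ^ j * v j) / fact j * ((\<Prod>i<j. real k - real i) / real n ^ j) = (\<Prod>i<j. real k - real i) / fact j * v j"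
          using npos by (simp add: field_simps)
        ultimately show ?thesis by (simp add: binom_prod u_def)
      qed
      have "(\<Sum>j<d. real (k choose j) * v j) - poly F (real k / real n)
          = (\<Sum>j<d. u j / fact j * ((\<Prod>i<j. real k / real n - real i / real n) - (real k / real n) ^ j))"
        by (simp add: polyF eq sum_subtractf[symmetric] right_diff_distrib)
      also have "\<bar>\<dots>\<bar> \<le> (\<Sum>j<d. \<bar>u j\<bar> * (real d ^ 2 / real n))"
      proof (rule order.trans[OF sum_abs], rule sum_mono)
        fix j assume "j \<in> {..<d}"
        then have jd: "j < d" by simp
        have f1: "fact j \<ge> (1::real)" by simp
        have "\<bar>(\<Prod>i<j. real k / real n - real i / real n) - (real k / real n) ^ j\<bar> \<le> real j * real j / real n"
          using prod_shift_close[OF x0 x1, of j n] jd n1 npos by simp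
        also have "\<dots> \<le> real d ^ 2 / real n"
          using jd npos by (intro divide_right_mono) (auto simp: power2_eq_square intro: mult_mono)
        finally have b: "\<bar>(\<Prod>i<j. real k / real n - real i / real n) - (real k / real n) ^ j\<bar> \<le> real d ^ 2 / real n" .
        have "\<bar>u j / fact j\<bar> \<le> \<bar>u j\<bar>" using f1 by (simp add: div_ge1_le)
        then show "\<bar>u j / fact j * ((\<Prod>i<j. real k / real n - real i / real n) - (real k / real n) ^ j)\<bar>
            \<le> \<bar>u j\<bar> * (real d ^ 2 / real n)"
          unfolding abs_mult using b by (intro mult_mono) auto
      qed
      also have "\<dots> = S * (real d ^ 2 / real n)" by (simp only: S_def sum_distrib_right)
      finally show ?thesis .
    qed
    have lip: "\<bar>poly F x - poly F y\<bar> \<le> S * (real d * \<bar>x - y\<bar>)"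
      if "0 \<le> x" "x \<le> 1" "0 \<le> y" "y \<le> 1" for x y
    proof -
      have "poly F x - poly F y = (\<Sum>j<d. u j / fact j * (x ^ j - y ^ j))"
        by (simp add: polyF sum_subtractf[symmetric] right_diff_distrib)
      also have "\<bar>\<dots>\<bar> \<le> (\<Sum>j<d. \<bar>u j\<bar> * (real d * \<bar>x - y\<bar>))"
      proof (rule order.trans[OF sum_abs], rule sum_mono)
        fix j assume "j \<in> {..<d}"
        then have jd: "j < d" by simp
        have f1: "fact j \<ge> (1::real)" by simp
        have "\<bar>x ^ j - y ^ j\<bar> \<le> real j * \<bar>x - y\<bar>" by (rule pow_lip[OF that])
        also have "\<dots> \<le> real d * \<bar>x - y\<bar>" using jd by (intro mult_right_mono) auto
        finally have b: "\<bar>x ^ j - y ^ j\<bar> \<le> real d * \<bar>x - y\<bar>" .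
        have "\<bar>u j / fact j\<bar> \<le> \<bar>u j\<bar>" using f1 by (simp add: div_ge1_le)
        then show "\<bar>u j / fact j * (x ^ j - y ^ j)\<bar> \<le> \<bar>u j\<bar> * (real d * \<bar>x - y\<bar>)"
          unfolding abs_mult using b by (intro mult_mono) auto
      qed
      also have "\<dots> = S * (real d * \<bar>x - y\<bar>)" by (simp only: S_def sum_distrib_right)
      finally show ?thesis .
    qed
    have node: "\<bar>poly F (t i)\<bar> \<le> 1 + S * c / real n" if "i < d" for i
    proof -
      define k where "k = n * (i+1) div (d+1)"
      have kle: "real k \<le> real n * real (i+1) / real (d+1)"
      proof -
        have "k * (d+1) \<le> n*(i+1)" unfolding k_def by (rule div_times_less_eq_dividend)
        then have "real k * real (d+1) \<le> real n * real (i+1)" by (metis of_nat_le_iff of_nat_mult)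
        then show ?thesis by (subst pos_le_divide_eq) auto
      qed
      have kge: "real n * real (i+1) / real (d+1) < real k + 1"
      proof -
        have m: "n*(i+1) div (d+1) * (d+1) + n*(i+1) mod (d+1) = n*(i+1)" by (rule div_mult_mod_eq)
        have "n*(i+1) mod (d+1) < d+1" by simp
        then have "n * (i+1) < (k + 1) * (d+1)" unfolding k_def using m
          by (simp only: distrib_right mult_1_left)
        then have "real n * real (i+1) < (real k + 1) * real (d+1)" by (metis of_nat_1 of_nat_add of_nat_less_iff of_nat_mult)
        then show ?thesis by (simp add: field_simps)
      qed
      have k1: "1 \<le> k"
      proof -
        have "2*(d+1) * 1 \<le> n * (i+1)" using n1 by (intro mult_le_mono) auto
        then have "2*(d+1) div (d+1) \<le> n * (i+1) div (d+1)" by (intro div_le_mono) simp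
        moreover have "2*(d+1) div (d+1) = 2" by (rule nonzero_mult_div_cancel_right) simp
        ultimately have "2 \<le> n * (i+1) div (d+1)" by simp
        then show ?thesis unfolding k_def by simp
      qed
      have kn: "k < n"
      proof -
        have "real n * real (i+1) / real (d+1) < real n"
          using that npos by (simp add: field_simps)
        then show ?thesis using kle by linarith
      qed
      have tdef: "t i = real n * real (i+1) / real (d+1) / real n" using npos by (simp add: t_def)
      have td: "\<bar>t i - real k / real n\<bar> \<le> 1 / real n"
      proof -
        define y where "y = real n * real (i+1) / real (d+1)"
        have "t i - real k / real n = (y - real k) / real n" unfolding tdef y_def by (simp add: diff_divide_distrib)
        moreover have "\<bar>y - real k\<bar> \<le> 1" using kle kge unfolding y_def by linarith
        ultimately show ?thesis using npos by (simp add: abs_divide divide_right_mono)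
      qed
      have t01: "0 \<le> t i" "t i \<le> 1" using that by (auto simp: t_def field_simps)
      have k01: "0 \<le> real k / real n" "real k / real n \<le> 1" using kn npos by (auto simp: field_simps)
      have Hk: "\<bar>\<Sum>j<d. real (k choose j) * v j\<bar> \<le> 1" using H k1 kn by blast
      have l2: "\<bar>poly F (t i) - poly F (real k / real n)\<bar> \<le> S * (real d * (1 / real n))"
        using lip[OF t01 k01] td S0 by (meson mult_left_mono of_nat_0_le_iff order_trans mult_nonneg_nonneg)
      have l1: "\<bar>(\<Sum>j<d. real (k choose j) * v j) - poly F (real k / real n)\<bar> \<le> S * (real d ^ 2 / real n)"
        using approx[of k] kn by simp
      have "\<bar>poly F (t i)\<bar> \<le> \<bar>\<Sum>j<d. real (k choose j) * v j\<bar>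
          + \<bar>(\<Sum>j<d. real (k choose j) * v j) - poly F (real k / real n)\<bar>
          + \<bar>poly F (t i) - poly F (real k / real n)\<bar>" by linarith
      also have "\<dots> \<le> 1 + S * (real d ^ 2 / real n) + S * (real d * (1 / real n))"
        using Hk l1 l2 by linarith
      also have "\<dots> = 1 + S * c / real n" by (simp add: c_def add_divide_distrib distrib_left)
      finally show ?thesis .
    qed
    have ubound: "\<bar>u j\<bar> \<le> fact d * Gm * real d * (1 + S * c / real n)" if "j < d" for j
    proof -
      have "\<bar>u j\<bar> = fact j * \<bar>coeff F j\<bar>" using that by (simp add: coeffF abs_mult)
      also have "\<dots> \<le> fact d * (Gm * (\<Sum>i<d. \<bar>poly F (t i)\<bar>))"
        using lag[OF degF, of j] that by (intro mult_mono) (auto intro: fact_mono Gm0)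
      also have "\<dots> \<le> fact d * (Gm * (\<Sum>i<d. 1 + S * c / real n))"
        using node Gm0 by (intro mult_left_mono sum_mono) auto
      also have "\<dots> = fact d * Gm * real d * (1 + S * c / real n)" by simp
      finally show ?thesis .
    qed
    have "(\<Sum>j<d. \<bar>u j\<bar>) \<le> (\<Sum>j<d. fact d * Gm * real d * (1 + S * c / real n))"
      by (rule sum_mono) (use ubound in auto)
    then have "S \<le> (\<Sum>j<d. fact d * Gm * real d * (1 + S * c / real n))" by (simp only: S_def)
    also have "\<dots> = M + M * c * S / real n" by (simp add: M_def field_simps)
    finally have S1: "S \<le> M + M * c * S / real n" .
    have "M * c * S / real n \<le> S / 2"
    proof -
      have "(2 * M * c) * S \<le> real n * S" using n2 S0 by (rule mult_right_mono)
      then have "M * c * S * 2 \<le> real n * S" by (simp add: algebra_simps)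
      then show ?thesis using npos by (simp add: field_simps)
    qed
    then have S2: "S \<le> 2 * M" using S1 by linarith
    have "\<bar>u j\<bar> \<le> S" unfolding S_def using jd by (intro member_le_sum) auto
    then have "\<bar>v j\<bar> * real n ^ j \<le> 2 * M" using S2 by (simp add: u_def abs_mult mult.commute)
    then show "\<bar>v j\<bar> \<le> 2 * M / real n ^ j" using npos by (simp add: field_simps)
  qed
qed

lemma vec_poly_bound:
  "\<exists>K n0. \<forall>n\<ge>n0. \<forall>x::nat \<Rightarrow> real^'d.
     (\<forall>k. 1 \<le> k \<and> k < n \<longrightarrow> norm (\<Sum>j<D. real (k choose j) *\<^sub>R x j) \<le> 1) \<longrightarrow>
     (\<forall>j<D. norm (x j) \<le> K / real n ^ j)"
proof -
  obtain K n0 where H: "\<And>n v. n \<ge> n0 \<Longrightarrow>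
     (\<forall>k. 1 \<le> k \<and> k < n \<longrightarrow> \<bar>\<Sum>j<D. real (k choose j) * v j\<bar> \<le> 1) \<Longrightarrow>
     (\<forall>j<D. \<bar>v j\<bar> \<le> K / real n ^ j)"
    using poly_sample_bound[of D] by blast
  show ?thesis
  proof (intro exI allI impI)
    fix n and x :: "nat \<Rightarrow> real^'d" and j
    assume n: "n0 \<le> n" and Hx: "\<forall>k. 1 \<le> k \<and> k < n \<longrightarrow> norm (\<Sum>j<D. real (k choose j) *\<^sub>R x j) \<le> 1"
      and j: "j < D"
    have comp: "\<bar>x j $ r\<bar> \<le> K / real n ^ j" for r
    proof -
      have "\<forall>k. 1 \<le> k \<and> k < n \<longrightarrow> \<bar>\<Sum>j<D. real (k choose j) * (x j $ r)\<bar> \<le> 1"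
      proof (intro allI impI)
        fix k assume "1 \<le> k \<and> k < n"
        then have "norm (\<Sum>j<D. real (k choose j) *\<^sub>R x j) \<le> 1" using Hx by blast
        moreover have "\<bar>(\<Sum>j<D. real (k choose j) *\<^sub>R x j) $ r\<bar> \<le> norm (\<Sum>j<D. real (k choose j) *\<^sub>R x j)"
          by (rule component_le_norm_cart)
        ultimately show "\<bar>\<Sum>j<D. real (k choose j) * (x j $ r)\<bar> \<le> 1" by simp
      qed
      then show ?thesis using H[OF n, of "\<lambda>j. x j $ r"] j by blast
    qed
    have "norm (x j) \<le> (\<Sum>r\<in>UNIV. \<bar>x j $ r\<bar>)" by (rule norm_le_l1_cart)
    also have "\<dots> \<le> (\<Sum>r\<in>(UNIV::'d set). K / real n ^ j)" by (intro sum_mono comp)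
    also have "\<dots> = real CARD('d) * K / real n ^ j" by simp
    finally show "norm (x j) \<le> real CARD('d) * K / real n ^ j" .
  qed
qed

typedef 'a wo = "{..<CARD('a)} \<union> {0::nat}" morphisms rep_wo abs_wo by auto

instance wo :: (type) finite
proof
  have "abs_wo ` ({..<CARD('a)} \<union> {0::nat}) = (UNIV :: 'a wo set)"
    by (rule type_definition.Abs_image[OF type_definition_wo])
  then show "finite (UNIV :: 'a wo set)" by (metis finite_imageI finite_Un finite_lessThan finite.emptyI finite_insert)
qed

instantiation wo :: (type) linorder
begin
definition less_eq_wo :: "'a wo \<Rightarrow> 'a wo \<Rightarrow> bool" where "less_eq_wo x y \<longleftrightarrow> rep_wo x \<le> rep_wo y"
definition less_wo :: "'a wo \<Rightarrow> 'a wo \<Rightarrow> bool" where "less_wo x y \<longleftrightarrow> rep_wo x < rep_wo y"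
instance by standard (auto simp: less_eq_wo_def less_wo_def rep_wo_inject)
end

instance wo :: (type) wellorder
proof
  fix P :: "'a wo \<Rightarrow> bool" and a
  assume H: "\<And>x. (\<And>y. y < x \<Longrightarrow> P y) \<Longrightarrow> P x"
  have "\<forall>x::'a wo. rep_wo x = m \<longrightarrow> P x" for m
  proof (induction m rule: less_induct)
    case (less m)
    show ?case
    proof (intro allI impI)
      fix x :: "'a wo" assume "rep_wo x = m"
      then show "P x" using less H by (auto simp: less_wo_def)
    qed
  qed
  then show "P a" by blast
qed

lemma card_wo: "CARD('a::finite wo) = CARD('a)"
proof -
  have "CARD('a wo) = card ({..<CARD('a)} \<union> {0::nat})"
    using type_definition.card[OF type_definition_wo] .
  also have "\<dots> = CARD('a)" using finite_UNIV_card_ge_0[where 'a='a] by (auto simp: insert_absorb)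
  finally show ?thesis .
qed

lemma Basis_cart_real: "(Basis :: (real^'n) set) = range (\<lambda>i. axis i 1)"
  by (auto simp: Basis_vec_def)

lemma prod_Basis_cart: "(\<Prod>b\<in>(Basis::(real^'n) set). f b) = (\<Prod>i\<in>UNIV. f (axis i 1))"
  by (simp add: Basis_cart_real prod.reindex inj_on_def axis_eq_axis)

lemma phi_measure:
  fixes g :: "'b::finite \<Rightarrow> 'a::finite" and S :: "(real^'a) set"
  assumes bg: "bij g" and S: "S \<in> sets borel"
  shows "measure lebesgue ((\<lambda>x. (\<chi> i. x $ g i) :: real^'b) ` S) = measure lebesgue S"
    and "((\<lambda>x. (\<chi> i. x $ g i) :: real^'b) ` S) \<in> sets borel"
proof -
  define Phi where "Phi = (\<lambda>x::real^'a. (\<chi> i. x $ g i) :: real^'b)"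
  define Psi where "Psi = (\<lambda>y::real^'b. (\<chi> j. y $ inv g j) :: real^'a)"
  have gi1: "g (inv g j) = j" for j using bg by (simp add: bij_def surj_f_inv_f)
  have gi2: "inv g (g i) = i" for i using bg by (simp add: bij_def inv_f_f)
  have PsiPhi: "Psi (Phi x) = x" for x by (simp add: Psi_def Phi_def gi1 vec_eq_iff)
  have PhiPsi: "Phi (Psi y) = y" for y by (simp add: Psi_def Phi_def gi2 vec_eq_iff)
  have img: "Phi ` T = Psi -` T" for T
    using PsiPhi PhiPsi by (auto simp: image_def) (metis)
  have linPsi: "linear Psi" by (auto simp: Psi_def linear_iff vec_eq_iff)
  have mPsi: "Psi \<in> borel_measurable borel"
  proof -
    have "bounded_linear Psi" using linPsi linear_linear by blast
    then show ?thesis by (intro borel_measurable_continuous_onI linear_continuous_on)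
  qed
  have distr_eq: "lborel = distr (lborel :: (real^'b) measure) borel Psi"
  proof (rule lborel_eqI)
    fix l u :: "real^'a"
    assume le: "\<And>b. b \<in> Basis \<Longrightarrow> l \<bullet> b \<le> u \<bullet> b"
    have le': "l $ j \<le> u $ j" for j using le[of "axis j 1"] by (auto simp: Basis_vec_def inner_axis)
    have pre: "Psi -` box l u = box (Phi l) (Phi u)"
    proof -
      have "y \<in> box l u \<longleftrightarrow> (\<forall>j. l $ j < y $ j \<and> y $ j < u $ j)" for y :: "real^'a"
        by (simp add: mem_box_cart)
      then show ?thesis
        apply (auto simp: mem_box_cart Psi_def Phi_def)
        apply (metis gi1 gi2)+
        done
    qed
    have "emeasure (distr lborel borel Psi) (box l u) = emeasure lborel (Psi -` box l u)"
      using mPsi by (simp add: emeasure_distr)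
    also have "\<dots> = emeasure lborel (box (Phi l) (Phi u))" by (simp add: pre)
    also have "\<dots> = (\<Prod>b\<in>Basis. (Phi u - Phi l) \<bullet> b)"
      using le' by (auto simp: emeasure_lborel_box_eq Basis_vec_def inner_axis Phi_def)
    also have "\<dots> = (\<Prod>i\<in>UNIV. u $ g i - l $ g i)" by (simp add: prod_Basis_cart inner_axis Phi_def)
    also have "\<dots> = (\<Prod>j\<in>UNIV. u $ j - l $ j)"
      using prod.reindex_bij_betw[OF bg[unfolded bij_betw_def[symmetric]], of "\<lambda>j. u $ j - l $ j"]
      by (simp add: bij_betw_def bg)
    also have "\<dots> = (\<Prod>b\<in>Basis. (u - l) \<bullet> b)" by (simp add: prod_Basis_cart inner_axis)
    finally show "emeasure (distr lborel borel Psi) (box l u) = (\<Prod>b\<in>Basis. (u - l) \<bullet> b)" .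
  qed simp
  have PS: "Psi -` S \<in> sets borel"
    using measurable_sets[OF mPsi S] by simp
  have "measure lebesgue (Phi ` S) = measure lborel (Psi -` S)"
    using PS by (simp add: img measure_completion)
  also have "\<dots> = measure (distr lborel borel Psi) S"
    using mPsi S by (simp add: measure_distr)
  also have "\<dots> = measure lebesgue S" using S by (simp flip: distr_eq)
  finally show "measure lebesgue ((\<lambda>x. (\<chi> i. x $ g i) :: real^'b) ` S) = measure lebesgue S"
    by (simp add: Phi_def)
  show "((\<lambda>x. (\<chi> i. x $ g i) :: real^'b) ` S) \<in> sets borel"
  proof -
    have "Psi -` S \<inter> space borel \<in> sets borel" by (rule measurable_sets[OF mPsi S])
    then show ?thesis using img[of S] unfolding Phi_def by simp
  qed
qed

lemma linear_image_measure_finite: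
  fixes f :: "real^'a::finite \<Rightarrow> real^'a" and g :: "('b::{finite,wellorder}) \<Rightarrow> 'a" and S :: "(real^'a) set"
  assumes bg: "bij g" and lf: "linear f" and S: "compact S"
  shows "measure lebesgue (f ` S) =
     \<bar>det (matrix ((\<lambda>x. (\<chi> i. x $ g i) :: real^'b::{finite,wellorder}) \<circ> f \<circ> (\<lambda>y. (\<chi> j. y $ inv g j) :: real^'a)))\<bar> * measure lebesgue S"
proof -
  define Phi where "Phi = (\<lambda>x::real^'a. (\<chi> i. x $ g i) :: real^'b::{finite,wellorder})"
  define Psi where "Psi = (\<lambda>y::real^'b::{finite,wellorder}. (\<chi> j. y $ inv g j) :: real^'a)"
  have gi1: "g (inv g j) = j" for j using bg by (simp add: bij_def surj_f_inv_f)
  have PsiPhi: "Psi (Phi x) = x" for x by (simp add: Psi_def Phi_def gi1 vec_eq_iff)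
  have linPhi: "linear Phi" by (auto simp: Phi_def linear_iff vec_eq_iff)
  have linPsi: "linear Psi" by (auto simp: Psi_def linear_iff vec_eq_iff)
  have lin3: "linear (Phi \<circ> f \<circ> Psi)" using linPhi linPsi lf by (intro linear_compose) auto
  have cfS: "compact (f ` S)" using lf S by (intro compact_continuous_image linear_continuous_on) (simp add: linear_linear[symmetric])
  have cPS: "compact (Phi ` S)" using linPhi S by (intro compact_continuous_image linear_continuous_on) (simp add: linear_linear[symmetric])
  have "measure lebesgue (f ` S) = measure lebesgue (Phi ` (f ` S))"
    using phi_measure(1)[OF bg borel_compact[OF cfS]] by (simp add: Phi_def)
  also have "Phi ` (f ` S) = (Phi \<circ> f \<circ> Psi) ` (Phi ` S)"
    by (force simp: image_comp o_def PsiPhi)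
  also have "measure lebesgue \<dots> = \<bar>det (matrix (Phi \<circ> f \<circ> Psi))\<bar> * measure lebesgue (Phi ` S)"
    by (rule measure_linear_image[OF lin3 lmeasurable_compact[OF cPS]])
  also have "measure lebesgue (Phi ` S) = measure lebesgue S"
    using phi_measure(1)[OF bg borel_compact[OF S]] by (simp add: Phi_def)
  finally show ?thesis by (simp only: Phi_def Psi_def)
qed

lemma det_conj_diag:
  fixes g :: "'b::finite \<Rightarrow> 'a::finite" and c :: "'a \<Rightarrow> real"
  assumes bg: "bij g"
  shows "det (matrix ((\<lambda>x. (\<chi> i. x $ g i) :: real^'b) \<circ> (\<lambda>x. \<chi> j. c j * x $ j) \<circ> (\<lambda>y. (\<chi> j. y $ inv g j) :: real^'a)))
     = (\<Prod>j\<in>UNIV. c j)"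
proof -
  have gi2: "inv g (g i) = i" for i using bg by (simp add: bij_def inv_f_f)
  have "inj g" using bg by (simp add: bij_def)
  have M: "matrix ((\<lambda>x. (\<chi> i. x $ g i) :: real^'b) \<circ> (\<lambda>x. \<chi> j. c j * x $ j) \<circ> (\<lambda>y. (\<chi> j. y $ inv g j) :: real^'a))
     = (\<chi> i k. if i = k then c (g i) else 0)"
    using \<open>inj g\<close> by (auto simp: matrix_def vec_eq_iff axis_def gi2 inj_eq dest: injD)
  have "det ((\<chi> i k. if i = k then c (g i) else 0) :: real^'b^'b) = (\<Prod>i\<in>UNIV. c (g i))"
    by (subst det_diagonal) auto
  also have "\<dots> = (\<Prod>j\<in>UNIV. c j)"
    using prod.reindex_bij_betw[of g UNIV UNIV c] bg by (simp add: bij_betw_def)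
  finally show ?thesis using M by simp
qed

lemma adapted_exists:
  fixes N :: "real^'d^'d"
  shows "\<exists>S w. independent S \<and> (\<forall>b\<in>S. matpow N (Suc (w b)) *v b = 0 \<and> w b < m) \<and>
     (\<forall>j\<le>m. {x. matpow N j *v x = 0} \<subseteq> span {b\<in>S. w b < j})"
proof (induction m)
  case 0
  show ?case by (rule exI[of _ "{}"], rule exI[of _ "\<lambda>_. 0"]) (auto simp: matrix_vector_mul_lid dependent_def)
next
  case (Suc m)
  then obtain S w where indS: "independent S" and Sw: "\<forall>b\<in>S. matpow N (Suc (w b)) *v b = 0 \<and> w b < m"
    and Sk: "\<forall>j\<le>m. {x. matpow N j *v x = 0} \<subseteq> span {b\<in>S. w b < j}" by blast
  define K where "K = {x. matpow N (Suc m) *v x = 0}"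
  have kill: "matpow N (Suc m) *v b = 0" if "b \<in> S" for b
  proof -
    have "matpow N (Suc m) *v b = matpow N (m - w b) *v (matpow N (Suc (w b)) *v b)"
      using matpow_add_vec[of N "m - w b" "Suc (w b)" b] Sw that by (simp add: Suc_diff_le less_imp_le)
    then show ?thesis using Sw that by simp
  qed
  have "S \<subseteq> K" using kill by (auto simp: K_def)
  then obtain B where SB: "S \<subseteq> B" and BK: "B \<subseteq> K" and indB: "independent B" and KB: "K \<subseteq> span B"
    using maximal_independent_subset_extend[OF _ indS] by metis
  define w' where "w' b = (if b \<in> S then w b else m)" for b
  show ?case
  proof (intro exI conjI ballI allI impI)
    show "independent B" by (rule indB)
    fix b assume "b \<in> B"
    show "matpow N (Suc (w' b)) *v b = 0"
      using Sw \<open>b \<in> B\<close> BK by (auto simp: w'_def K_def)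
    show "w' b < Suc m" using Sw by (auto simp: w'_def less_SucI)
  next
    fix j assume "j \<le> Suc m"
    show "{x. matpow N j *v x = 0} \<subseteq> span {b\<in>B. w' b < j}"
    proof (cases "j \<le> m")
      case True
      have "{b\<in>S. w b < j} \<subseteq> {b\<in>B. w' b < j}" using SB by (auto simp: w'_def)
      then show ?thesis using Sk True by (meson order_trans span_mono)
    next
      case False
      then have j: "j = Suc m" using \<open>j \<le> Suc m\<close> by simp
      have "{b\<in>B. w' b < j} = B" using Sw j by (auto simp: w'_def less_SucI)
      then show ?thesis using KB j by (simp add: K_def)
    qed
  qed
qed

lemma adapted_basis:
  fixes N :: "real^'d^'d"
  assumes nil: "matpow N CARD('d) = 0"
  shows "\<exists>e::'d \<Rightarrow> real^'d. \<exists>\<omega>::'d \<Rightarrow> nat. inj e \<and> independent (range e) \<and> span (range e) = UNIV \<and>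
     (\<forall>i. matpow N (Suc (\<omega> i)) *v e i = 0 \<and> \<omega> i < CARD('d)) \<and>
     (\<forall>j\<le>CARD('d). {x. matpow N j *v x = 0} \<subseteq> span (e ` {i. \<omega> i < j}))"
proof -
  obtain S w where indS: "independent S" and Sw: "\<forall>b\<in>S. matpow N (Suc (w b)) *v b = 0 \<and> w b < CARD('d)"
    and Sk: "\<forall>j\<le>CARD('d). {x. matpow N j *v x = 0} \<subseteq> span {b\<in>S. w b < j}"
    using adapted_exists[of N "CARD('d)"] by blast
  have spanS: "span S = UNIV"
  proof -
    have "{x. matpow N CARD('d) *v x = 0} = UNIV" using nil by simp
    then have "UNIV \<subseteq> span {b\<in>S. w b < CARD('d)}" using Sk by auto
    also have "\<dots> \<subseteq> span S" by (intro span_mono) auto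
    finally show ?thesis by auto
  qed
  have finS: "finite S" using indS by (rule finiteI_independent)
  have cardS: "card S = CARD('d)"
  proof -
    have "dim (span S) = card S" using indS by (rule dim_span_eq_card_independent)
    then show ?thesis using spanS by simp
  qed
  obtain e where e: "bij_betw e (UNIV::'d set) S"
    using finite_same_card_bij[OF finite_class.finite_UNIV finS] cardS by (metis)
  define \<omega> where "\<omega> i = w (e i)" for i
  have re: "range e = S" using e by (simp add: bij_betw_def)
  have ie: "inj e" using e by (simp add: bij_betw_def)
  have img: "e ` {i. \<omega> i < j} = {b\<in>S. w b < j}" for j
    using re by (auto simp: \<omega>_def)
  show ?thesis
    apply (rule exI[of _ e], rule exI[of _ \<omega>])
    using ie indS spanS Sw Sk re img by (auto simp: \<omega>_def)
qed

lemma coeff_indep_inj: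
  fixes v :: "'i \<Rightarrow> 'a::real_vector"
  assumes fin: "finite I" and H: "\<And>c. (\<Sum>i\<in>I. c i *\<^sub>R v i) = 0 \<Longrightarrow> \<forall>i\<in>I. c i = 0"
  shows "inj_on v I"
proof (rule inj_onI, rule ccontr)
  fix i j assume ij: "i \<in> I" "j \<in> I" "v i = v j" "i \<noteq> j"
  define c where "c k = (if k = i then 1 else if k = j then -1 else (0::real))" for k
  have "(\<Sum>k\<in>I. c k *\<^sub>R v k) = (\<Sum>k\<in>I. (if k = i then v i else 0) + (if k = j then - v j else 0))"
    using ij by (intro sum.cong) (auto simp: c_def)
  also have "\<dots> = v i - v j" using ij fin by (simp add: sum.distrib)
  also have "\<dots> = 0" using ij by simp
  finally have "c i = 0" using H ij by blast
  then show False by (simp add: c_def)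
qed

lemma coeff_indep_independent:
  fixes v :: "'i \<Rightarrow> 'a::real_vector"
  assumes fin: "finite I" and H: "\<And>c. (\<Sum>i\<in>I. c i *\<^sub>R v i) = 0 \<Longrightarrow> \<forall>i\<in>I. c i = 0"
  shows "independent (v ` I)"
proof
  assume "dependent (v ` I)"
  then obtain u where u: "\<exists>y\<in>v ` I. u y \<noteq> 0" "(\<Sum>y\<in>v ` I. u y *\<^sub>R y) = 0"
    using dependent_finite[of "v ` I"] fin by auto
  have inj: "inj_on v I" by (rule coeff_indep_inj[OF fin H])
  have "(\<Sum>i\<in>I. u (v i) *\<^sub>R v i) = 0" using u(2) by (simp add: sum.reindex[OF inj])
  then have "\<forall>i\<in>I. u (v i) = 0" by (rule H)
  then show False using u(1) by auto
qed

lemma independent_coeff: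
  fixes v :: "'i \<Rightarrow> 'a::real_vector"
  assumes fin: "finite I" and inj: "inj_on v I" and ind: "independent (v ` I)"
    and s: "(\<Sum>i\<in>I. c i *\<^sub>R v i) = 0" and i: "i \<in> I"
  shows "c i = 0"
proof -
  define u where "u y = c (the_inv_into I v y)" for y
  have "(\<Sum>y\<in>v ` I. u y *\<^sub>R y) = (\<Sum>i\<in>I. u (v i) *\<^sub>R v i)" by (simp add: sum.reindex[OF inj])
  also have "\<dots> = (\<Sum>i\<in>I. c i *\<^sub>R v i)" using inj by (intro sum.cong) (auto simp: u_def the_inv_into_f_f)
  finally have "(\<Sum>y\<in>v ` I. u y *\<^sub>R y) = 0" using s by simp
  then have "\<forall>y\<in>v ` I. u y = 0" using ind dependent_finite[of "v ` I"] fin by auto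
  then show ?thesis using i inj by (auto simp: u_def the_inv_into_f_f)
qed

lemma span_image_repr:
  fixes v :: "'i \<Rightarrow> 'a::real_vector"
  assumes fin: "finite I" and inj: "inj_on v I" and x: "x \<in> span (v ` I)"
  shows "\<exists>a. x = (\<Sum>i\<in>I. a i *\<^sub>R v i)"
proof -
  obtain u where "x = (\<Sum>y\<in>v ` I. u y *\<^sub>R y)"
    using x span_finite[of "v ` I"] fin by auto
  then have "x = (\<Sum>i\<in>I. u (v i) *\<^sub>R v i)" by (simp add: sum.reindex[OF inj])
  then show ?thesis by (rule exI[of _ "\<lambda>i. u (v i)"])
qed

locale wsetup =
  fixes A :: "real^'d^'d" and e :: "'d \<Rightarrow> real^'d" and \<omega> :: "'d \<Rightarrow> nat"
  assumes nil: "matpow (mat 1 - A) CARD('d) = 0"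
    and ie: "inj e" and indep: "independent (range e)" and spanU: "span (range e) = UNIV"
    and killw: "\<And>i. matpow (mat 1 - A) (Suc (\<omega> i)) *v e i = 0"
    and wlt: "\<And>i. \<omega> i < CARD('d)"
    and flag: "\<And>j. j \<le> CARD('d) \<Longrightarrow> {x. matpow (mat 1 - A) j *v x = 0} \<subseteq> span (e ` {i. \<omega> i < j})"
begin

abbreviation "N \<equiv> mat 1 - A"

lemma Nkill: assumes "\<omega> i < j" shows "matpow N j *v e i = 0"
proof -
  have "matpow N j *v e i = matpow N (j - Suc (\<omega> i)) *v (matpow N (Suc (\<omega> i)) *v e i)"
    using matpow_add_vec[of N "j - Suc (\<omega> i)" "Suc (\<omega> i)" "e i"] assms by simp
  then show ?thesis using killw by simp
qed

lemma Nzero: "CARD('d) \<le> j \<Longrightarrow> matpow N j *v x = 0"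
  by (rule matpow_zero_ge[OF nil])

lemma Aexp: "matpow A k *v x = (\<Sum>j<CARD('d). ((-1)^j * real (k choose j)) *\<^sub>R (matpow N j *v x))"
proof -
  have AN: "mat 1 - N = A" by simp
  have "matpow A k *v x = (\<Sum>j\<le>k. ((-1)^j * real (k choose j)) *\<^sub>R (matpow N j *v x))"
    using binom_expand[of N k x] by (simp only: AN)
  also have "\<dots> = (\<Sum>j<Suc k + CARD('d). ((-1)^j * real (k choose j)) *\<^sub>R (matpow N j *v x))"
    by (rule sum.mono_neutral_left) auto
  also have "\<dots> = (\<Sum>j<CARD('d). ((-1)^j * real (k choose j)) *\<^sub>R (matpow N j *v x))"
    by (rule sum.mono_neutral_right) (auto simp: Nzero)
  finally show ?thesis .
qed

lemma coeff0: "(\<Sum>i\<in>UNIV. c i *\<^sub>R e i) = 0 \<Longrightarrow> c i = 0"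
  using independent_coeff[of UNIV e c i] ie indep by simp

lemma repr: "\<exists>c. x = (\<Sum>i\<in>UNIV. c i *\<^sub>R e i)"
  using span_image_repr[of UNIV e x] ie spanU by simp

definition R where "R = (\<Sum>i\<in>UNIV. \<Sum>j<CARD('d). norm (matpow N j *v e i))"

lemma Rbound: "norm (matpow N j *v e i) \<le> R"
proof (cases "j < CARD('d)")
  case True
  have "norm (matpow N j *v e i) \<le> (\<Sum>j<CARD('d). norm (matpow N j *v e i))"
    using True by (intro member_le_sum) auto
  also have "\<dots> \<le> R" unfolding R_def
    by (rule member_le_sum[where f="\<lambda>i. \<Sum>j<CARD('d). norm (matpow N j *v e i)"]) (auto intro: sum_nonneg)
  finally show ?thesis .
next
  case False then show ?thesis by (simp add: Nzero R_def sum_nonneg)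
qed

lemma R0: "R \<ge> 0" by (simp add: R_def sum_nonneg)

definition L :: "nat \<Rightarrow> real^'d \<Rightarrow> real^'d" where
  "L n \<eta> = (\<Sum>i\<in>UNIV. (\<eta> $ i / real n ^ \<omega> i) *\<^sub>R e i)"

lemma Ake: assumes "k < n" shows "norm (matpow A k *v e i) \<le> real n ^ \<omega> i * (real CARD('d) * R)"
proof -
  have "norm (matpow A k *v e i) \<le> (\<Sum>j<CARD('d). norm (((-1)^j * real (k choose j)) *\<^sub>R (matpow N j *v e i)))"
    unfolding Aexp by (rule norm_sum)
  also have "\<dots> \<le> (\<Sum>j<CARD('d). real n ^ \<omega> i * R)"
  proof (rule sum_mono)
    fix j assume "j \<in> {..<CARD('d)}"
    show "norm (((-1)^j * real (k choose j)) *\<^sub>R (matpow N j *v e i)) \<le> real n ^ \<omega> i * R"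
    proof (cases "\<omega> i < j")
      case True then show ?thesis using Nkill[OF True] R0 by simp
    next
      case False
      have "k choose j \<le> k ^ j" by (cases "j \<le> k") (auto simp: binomial_le_pow binomial_eq_0)
      then have "real (k choose j) \<le> real (k ^ j)" by (rule of_nat_mono)
      then have "real (k choose j) \<le> real k ^ j" by simp
      also have "\<dots> \<le> real n ^ j" using assms by (intro power_mono) auto
      also have "\<dots> \<le> real n ^ \<omega> i"
      proof (rule power_increasing)
        show "j \<le> \<omega> i" using False by simp
        show "1 \<le> real n" using assms by simp
      qed
      finally have b: "real (k choose j) \<le> real n ^ \<omega> i" .
      have "norm (((-1)^j * real (k choose j)) *\<^sub>R (matpow N j *v e i)) = real (k choose j) * norm (matpow N j *v e i)"
        by (simp add: abs_mult)
      also have "\<dots> \<le> real n ^ \<omega> i * R" using b Rbound[of j i] by (intro mult_mono) auto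
      finally show ?thesis .
    qed
  qed
  also have "\<dots> = real n ^ \<omega> i * (real CARD('d) * R)" by simp
  finally show ?thesis .
qed

lemma sum_abs_le: "(\<Sum>i\<in>UNIV. \<bar>(\<eta>::real^'d) $ i\<bar>) \<le> real CARD('d) * norm \<eta>"
proof -
  have "(\<Sum>i\<in>UNIV. \<bar>\<eta> $ i\<bar>) \<le> (\<Sum>i\<in>(UNIV::'d set). norm \<eta>)" by (intro sum_mono component_le_norm_cart)
  then show ?thesis by simp
qed

lemma easy: "\<exists>c>0. \<forall>n\<ge>1. \<forall>\<eta>. norm \<eta> \<le> c \<longrightarrow> L n \<eta> \<in> W_set A n"
proof -
  define c where "c = 1 / (real CARD('d) * real CARD('d) * R + 1)"
  have dR: "real CARD('d) * real CARD('d) * R \<ge> 0" using R0 by simp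
  have c0: "c > 0" using dR by (simp add: c_def)
  show ?thesis
  proof (intro exI[of _ c] conjI allI impI c0)
    fix n :: nat and \<eta> :: "real^'d" assume n: "1 \<le> n" and eta: "norm \<eta> \<le> c"
    show "L n \<eta> \<in> W_set A n" unfolding W_set_def
    proof (intro CollectI allI impI, elim conjE)
      fix k assume k: "1 \<le> k" "k < n"
      have npos: "real n > 0" using n by simp
      have "matpow A k *v L n \<eta> = (\<Sum>i\<in>UNIV. (\<eta> $ i / real n ^ \<omega> i) *\<^sub>R (matpow A k *v e i))"
        by (simp add: L_def mv_sum matrix_vector_mult_scaleR)
      also have "norm \<dots> \<le> (\<Sum>i\<in>UNIV. \<bar>\<eta> $ i\<bar> * (real CARD('d) * R))"
      proof (rule order.trans[OF norm_sum], rule sum_mono)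
        fix i :: 'd
        have "norm ((\<eta> $ i / real n ^ \<omega> i) *\<^sub>R (matpow A k *v e i))
            = \<bar>\<eta> $ i\<bar> / real n ^ \<omega> i * norm (matpow A k *v e i)" by (simp add: abs_divide)
        also have "\<dots> \<le> \<bar>\<eta> $ i\<bar> / real n ^ \<omega> i * (real n ^ \<omega> i * (real CARD('d) * R))"
          using Ake[OF k(2)] by (intro mult_left_mono) auto
        also have "\<dots> = \<bar>\<eta> $ i\<bar> * (real CARD('d) * R)" using npos by simp
        finally show "norm ((\<eta> $ i / real n ^ \<omega> i) *\<^sub>R (matpow A k *v e i)) \<le> \<bar>\<eta> $ i\<bar> * (real CARD('d) * R)" .
      qed
      also have "\<dots> = (\<Sum>i\<in>UNIV. \<bar>\<eta> $ i\<bar>) * (real CARD('d) * R)" by (simp add: sum_distrib_right)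
      also have "\<dots> \<le> (real CARD('d) * norm \<eta>) * (real CARD('d) * R)" using R0 by (intro mult_right_mono sum_abs_le) auto
      also have "\<dots> \<le> (real CARD('d) * c) * (real CARD('d) * R)" using R0 eta by (intro mult_right_mono mult_left_mono) auto
      also have "\<dots> = (real CARD('d) * real CARD('d) * R) / (real CARD('d) * real CARD('d) * R + 1)" by (simp add: c_def)
      also have "\<dots> \<le> 1" using dR by simp
      finally show "norm (matpow A k *v L n \<eta>) \<le> 1" .
    qed
  qed
qed

end

context wsetup
begin

lemma lin_comb: "linear (\<lambda>c::real^'d. \<Sum>i\<in>UNIV. c $ i *\<^sub>R e i)"
  by (auto simp: linear_iff sum.distrib scaleR_add_left scaleR_sum_right)

lemma gamma_bound:
  assumes w: "w < CARD('d)"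
  shows "\<exists>\<gamma>>0. \<forall>c::real^'d. (\<forall>i. \<omega> i \<noteq> w \<longrightarrow> c $ i = 0) \<longrightarrow>
           \<gamma> * norm c \<le> norm (matpow N w *v (\<Sum>i\<in>UNIV. c $ i *\<^sub>R e i))"
proof -
  define s where "s = {c::real^'d. \<forall>i. \<omega> i \<noteq> w \<longrightarrow> c $ i = 0}"
  define f where "f c = matpow N w *v (\<Sum>i\<in>UNIV. c $ i *\<^sub>R e i)" for c :: "real^'d"
  have s_eq: "s = (\<Inter>i\<in>{i. \<omega> i \<noteq> w}. {c. c $ i = 0})" by (auto simp: s_def)
  have cs: "closed s" unfolding s_eq
    by (intro closed_INT ballI closed_Collect_eq) (auto intro: continuous_intros)
  have ss: "subspace s" by (auto simp: s_def subspace_def)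
  have lf: "linear f" unfolding f_def
    using linear_compose[OF lin_comb matrix_vector_mul_linear] by (simp add: o_def)
  have bf: "bounded_linear f" using lf linear_linear by blast
  have inj: "\<forall>c\<in>s. f c = 0 \<longrightarrow> c = 0"
  proof (intro ballI impI)
    fix c assume cs: "c \<in> s" and fc: "f c = 0"
    define x where "x = (\<Sum>i\<in>UNIV. c $ i *\<^sub>R e i)"
    have "x \<in> span (e ` {i. \<omega> i < w})" using flag[of w] w fc by (auto simp: f_def x_def)
    then obtain a where a: "x = (\<Sum>i\<in>{i. \<omega> i < w}. a i *\<^sub>R e i)"
      using span_image_repr[of "{i. \<omega> i < w}" e x] ie by (auto intro: inj_on_subset)
    define a' where "a' i = (if \<omega> i < w then a i else 0)" for i
    have "x = (\<Sum>i\<in>UNIV. a' i *\<^sub>R e i)"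
      unfolding a a'_def by (simp add: if_distrib[of "\<lambda>t. t *\<^sub>R _"] sum.If_cases Int_def)
    then have "(\<Sum>i\<in>UNIV. (c $ i - a' i) *\<^sub>R e i) = 0"
      by (simp add: x_def scaleR_diff_left sum_subtractf)
    then have eq: "c $ i = a' i" for i using coeff0 by fastforce
    show "c = 0"
    proof (subst vec_eq_iff, rule allI)
      fix i
      show "c $ i = 0 $ i"
      proof (cases "\<omega> i = w")
        case True then show ?thesis using eq[of i] by (simp add: a'_def)
      next
        case False then show ?thesis using cs by (simp add: s_def)
      qed
    qed
  qed
  obtain \<gamma> where g: "\<gamma> > 0" "\<forall>x\<in>s. norm (f x) \<ge> \<gamma> * norm x"
    using injective_imp_isometric[OF cs ss bf inj] by blast
  show ?thesis using g by (auto simp: s_def f_def)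
qed

end

context wsetup
begin

lemma NL: "matpow N w *v L n \<eta> = (\<Sum>i\<in>UNIV. (\<eta> $ i / real n ^ \<omega> i) *\<^sub>R (matpow N w *v e i))"
  by (simp add: L_def mv_sum matrix_vector_mult_scaleR)

lemma tri_bound:
  assumes K: "K \<ge> 0"
  shows "m \<le> CARD('d) \<Longrightarrow> \<exists>C\<ge>0. \<forall>n\<ge>1. \<forall>\<eta>. (\<forall>j<CARD('d). norm (matpow N j *v L n \<eta>) \<le> K / real n ^ j)
           \<longrightarrow> (\<forall>i. CARD('d) - m \<le> \<omega> i \<longrightarrow> \<bar>\<eta> $ i\<bar> \<le> C)"
proof (induction m)
  case 0
  show ?case by (intro exI[of _ 0]) (auto simp: not_le dest: order.strict_trans2[OF wlt])
next
  case (Suc m)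
  then obtain C' where C'0: "C' \<ge> 0" and IH: "\<And>n \<eta> i. n \<ge> 1 \<Longrightarrow> (\<forall>j<CARD('d). norm (matpow N j *v L n \<eta>) \<le> K / real n ^ j)
           \<Longrightarrow> CARD('d) - m \<le> \<omega> i \<Longrightarrow> \<bar>\<eta> $ i\<bar> \<le> C'" by force
  define w where "w = CARD('d) - Suc m"
  have w: "w < CARD('d)" using Suc.prems by (simp add: w_def)
  have w1: "CARD('d) - m = Suc w" using Suc.prems by (simp add: w_def)
  obtain \<gamma> where g0: "\<gamma> > 0" and g: "\<And>c::real^'d. (\<forall>i. \<omega> i \<noteq> w \<longrightarrow> c $ i = 0) \<Longrightarrow>
           \<gamma> * norm c \<le> norm (matpow N w *v (\<Sum>i\<in>UNIV. c $ i *\<^sub>R e i))"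
    using gamma_bound[OF w] by blast
  define C where "C = max C' ((K + real CARD('d) * C' * R) / \<gamma>)"
  show ?case
  proof (intro exI[of _ C] conjI allI impI)
    show "C \<ge> 0" using C'0 by (simp add: C_def)
    fix n :: nat and \<eta> :: "real^'d" and i
    assume n: "1 \<le> n" and Hb: "\<forall>j<CARD('d). norm (matpow N j *v L n \<eta>) \<le> K / real n ^ j"
      and wi: "CARD('d) - Suc m \<le> \<omega> i"
    have npos: "real n > 0" using n by simp
    show "\<bar>\<eta> $ i\<bar> \<le> C"
    proof (cases "\<omega> i = w")
      case False
      then have "CARD('d) - m \<le> \<omega> i" using wi w1 by (simp add: w_def)
      then show ?thesis using IH[OF n Hb] unfolding C_def by (meson max.coboundedI1)
    next
      case True
      define c where "c = (\<chi> i. if \<omega> i = w then \<eta> $ i else 0)"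
      define T where "T = (\<Sum>i\<in>UNIV. (if w < \<omega> i then (\<eta> $ i / real n ^ \<omega> i) *\<^sub>R (matpow N w *v e i) else 0))"
      have split: "matpow N w *v L n \<eta> = (1 / real n ^ w) *\<^sub>R (matpow N w *v (\<Sum>i\<in>UNIV. c $ i *\<^sub>R e i)) + T"
      proof -
        have "(1 / real n ^ w) *\<^sub>R (matpow N w *v (\<Sum>i\<in>UNIV. c $ i *\<^sub>R e i))
            = (\<Sum>i\<in>UNIV. (if \<omega> i = w then (\<eta> $ i / real n ^ \<omega> i) *\<^sub>R (matpow N w *v e i) else 0))"
          by (auto simp: c_def mv_sum matrix_vector_mult_scaleR scaleR_sum_right intro!: sum.cong)
        then have "(1 / real n ^ w) *\<^sub>R (matpow N w *v (\<Sum>i\<in>UNIV. c $ i *\<^sub>R e i)) + T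
            = (\<Sum>i\<in>UNIV. (if \<omega> i = w then (\<eta> $ i / real n ^ \<omega> i) *\<^sub>R (matpow N w *v e i) else 0)
                 + (if w < \<omega> i then (\<eta> $ i / real n ^ \<omega> i) *\<^sub>R (matpow N w *v e i) else 0))"
          by (simp add: T_def sum.distrib)
        also have "\<dots> = (\<Sum>i\<in>UNIV. (\<eta> $ i / real n ^ \<omega> i) *\<^sub>R (matpow N w *v e i))"
        proof (rule sum.cong)
          fix j :: 'd
          show "(if \<omega> j = w then (\<eta> $ j / real n ^ \<omega> j) *\<^sub>R (matpow N w *v e j) else 0)
                 + (if w < \<omega> j then (\<eta> $ j / real n ^ \<omega> j) *\<^sub>R (matpow N w *v e j) else 0)
                = (\<eta> $ j / real n ^ \<omega> j) *\<^sub>R (matpow N w *v e j)"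
            using Nkill[of j w] by (cases "\<omega> j < w") auto
        qed simp
        finally show ?thesis by (simp add: NL)
      qed
      have Tb: "norm T \<le> real CARD('d) * C' * R / real n ^ w"
      proof -
        have "norm T \<le> (\<Sum>i\<in>UNIV. (if w < \<omega> i then C' * R / real n ^ w else 0))"
          unfolding T_def
        proof (rule order.trans[OF norm_sum], rule sum_mono)
          fix j :: 'd
          show "norm (if w < \<omega> j then (\<eta> $ j / real n ^ \<omega> j) *\<^sub>R (matpow N w *v e j) else 0)
              \<le> (if w < \<omega> j then C' * R / real n ^ w else 0)"
          proof (cases "w < \<omega> j")
            case True
            have ej: "\<bar>\<eta> $ j\<bar> \<le> C'" using IH[OF n Hb] True w1 by simp
            have pw: "real n ^ w \<le> real n ^ \<omega> j" using True n by (intro power_increasing) auto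
            have "norm ((\<eta> $ j / real n ^ \<omega> j) *\<^sub>R (matpow N w *v e j))
                = \<bar>\<eta> $ j\<bar> * norm (matpow N w *v e j) / real n ^ \<omega> j" by (simp add: abs_divide)
            also have "\<dots> \<le> C' * R / real n ^ \<omega> j"
              using ej Rbound[of w j] C'0 R0 npos by (intro divide_right_mono mult_mono) auto
            also have "\<dots> \<le> C' * R / real n ^ w"
              using pw C'0 R0 npos by (intro divide_left_mono) auto
            finally show ?thesis using True by simp
          qed simp
        qed
        also have "\<dots> \<le> (\<Sum>i\<in>(UNIV::'d set). C' * R / real n ^ w)"
          using C'0 R0 npos by (intro sum_mono) auto
        finally show ?thesis by simp
      qed
      define V where "V = matpow N w *v (\<Sum>i\<in>UNIV. c $ i *\<^sub>R e i)"
      have "norm ((1 / real n ^ w) *\<^sub>R V) \<le> norm (matpow N w *v L n \<eta>) + norm T"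
        using split unfolding V_def by (metis add_diff_cancel_right' norm_triangle_ineq4)
      also have "\<dots> \<le> K / real n ^ w + real CARD('d) * C' * R / real n ^ w"
        using Hb w Tb by (intro add_mono) auto
      finally have "norm V / real n ^ w \<le> (K + real CARD('d) * C' * R) / real n ^ w"
        by (simp add: add_divide_distrib)
      then have Vb: "norm V \<le> K + real CARD('d) * C' * R"
        using npos by (simp add: divide_le_cancel)
      have "\<gamma> * norm c \<le> norm V" unfolding V_def by (rule g) (simp add: c_def)
      then have "\<gamma> * norm c \<le> K + real CARD('d) * C' * R" using Vb by simp
      then have "norm c \<le> (K + real CARD('d) * C' * R) / \<gamma>" using g0 by (simp add: field_simps)
      moreover have "\<bar>\<eta> $ i\<bar> \<le> norm c" using component_le_norm_cart[of c i] True by (simp add: c_def)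
      ultimately show ?thesis by (simp add: C_def)
    qed
  qed
qed

end

context wsetup
begin

lemma hard: "\<exists>C n0. n0 \<ge> 1 \<and> (\<forall>n\<ge>n0. \<forall>\<xi>\<in>W_set A n. \<exists>\<eta>. norm \<eta> \<le> C \<and> \<xi> = L n \<eta>)"
proof -
  obtain K n0 where KH: "\<And>n x. n \<ge> n0 \<Longrightarrow>
     (\<forall>k. 1 \<le> k \<and> k < n \<longrightarrow> norm (\<Sum>j<CARD('d). real (k choose j) *\<^sub>R x j) \<le> 1) \<Longrightarrow>
     (\<forall>j<CARD('d). norm ((x :: nat \<Rightarrow> real^'d) j) \<le> K / real n ^ j)"
    using vec_poly_bound[where 'd='d and D="CARD('d)"] by blast
  define K' where "K' = max K 0"
  have K'0: "K' \<ge> 0" by (simp add: K'_def)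
  obtain C where C0: "C \<ge> 0" and CH: "\<And>n \<eta> i. n \<ge> 1 \<Longrightarrow> (\<forall>j<CARD('d). norm (matpow N j *v L n \<eta>) \<le> K' / real n ^ j)
           \<Longrightarrow> CARD('d) - CARD('d) \<le> \<omega> i \<Longrightarrow> \<bar>\<eta> $ i\<bar> \<le> C"
    using tri_bound[OF K'0, of "CARD('d)"] by force
  show ?thesis
  proof (intro exI[of _ "real CARD('d) * C"] exI[of _ "max n0 1"] conjI allI impI ballI)
    show "max n0 1 \<ge> 1" by simp
    fix n \<xi> assume n: "max n0 1 \<le> n" and xi: "\<xi> \<in> W_set A n"
    have npos: "real n > 0" using n by simp
    define x where "x j = ((-1)^j) *\<^sub>R (matpow N j *v \<xi>)" for j
    have "\<forall>k. 1 \<le> k \<and> k < n \<longrightarrow> norm (\<Sum>j<CARD('d). real (k choose j) *\<^sub>R x j) \<le> 1"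
    proof (intro allI impI)
      fix k assume k: "1 \<le> k \<and> k < n"
      have "(\<Sum>j<CARD('d). real (k choose j) *\<^sub>R x j) = matpow A k *v \<xi>"
        by (simp add: Aexp x_def mult.commute)
      then show "norm (\<Sum>j<CARD('d). real (k choose j) *\<^sub>R x j) \<le> 1" using xi k by (simp add: W_set_def)
    qed
    then have xb: "\<forall>j<CARD('d). norm (x j) \<le> K / real n ^ j" using KH n by simp
    obtain c where c: "\<xi> = (\<Sum>i\<in>UNIV. c i *\<^sub>R e i)" using repr by blast
    define \<eta> where "\<eta> = (\<chi> i. c i * real n ^ \<omega> i)"
    have Leta: "L n \<eta> = \<xi>" using npos by (simp add: L_def \<eta>_def c)
    have "\<forall>j<CARD('d). norm (matpow N j *v L n \<eta>) \<le> K' / real n ^ j"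
    proof (intro allI impI)
      fix j assume "j < CARD('d)"
      then have "norm (x j) \<le> K / real n ^ j" using xb by blast
      also have "\<dots> \<le> K' / real n ^ j" using npos by (intro divide_right_mono) (auto simp: K'_def)
      finally show "norm (matpow N j *v L n \<eta>) \<le> K' / real n ^ j" by (simp add: x_def Leta)
    qed
    then have eb: "\<bar>\<eta> $ i\<bar> \<le> C" for i using CH[of n \<eta> i] n by simp
    have "norm \<eta> \<le> (\<Sum>i\<in>UNIV. \<bar>\<eta> $ i\<bar>)" by (rule norm_le_l1_cart)
    also have "\<dots> \<le> (\<Sum>i\<in>(UNIV::'d set). C)" by (intro sum_mono eb)
    finally show "\<exists>\<eta>. norm \<eta> \<le> real CARD('d) * C \<and> \<xi> = L n \<eta>" using Leta by (intro exI[of _ \<eta>]) simp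
  qed
qed

lemma ker_coeff:
  assumes k: "k \<le> CARD('d)" and z: "matpow N k *v (\<Sum>i\<in>UNIV. c i *\<^sub>R e i) = 0" and i: "k \<le> \<omega> i"
  shows "c i = 0"
proof -
  define x where "x = (\<Sum>i\<in>UNIV. c i *\<^sub>R e i)"
  have "x \<in> span (e ` {i. \<omega> i < k})" using flag[OF k] z by (auto simp: x_def)
  then obtain a where a: "x = (\<Sum>i\<in>{i. \<omega> i < k}. a i *\<^sub>R e i)"
    using span_image_repr[of "{i. \<omega> i < k}" e x] ie by (auto intro: inj_on_subset)
  define a' where "a' i = (if \<omega> i < k then a i else 0)" for i
  have "x = (\<Sum>i\<in>UNIV. a' i *\<^sub>R e i)"
    unfolding a a'_def by (simp add: if_distrib[of "\<lambda>t. t *\<^sub>R _"] sum.If_cases Int_def)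
  then have "(\<Sum>i\<in>UNIV. (c i - a' i) *\<^sub>R e i) = 0"
    by (simp add: x_def scaleR_diff_left sum_subtractf)
  then have "c i - a' i = 0" by (rule coeff0)
  then show ?thesis using i by (simp add: a'_def)
qed

lemma rank_eq:
  assumes k: "k \<le> CARD('d)"
  shows "dim (range (\<lambda>x. matpow N k *v x)) = card {i. k \<le> \<omega> i}"
proof -
  define I where "I = {i. k \<le> \<omega> i}"
  define v where "v i = matpow N k *v e i" for i
  have H: "\<forall>i\<in>I. c i = 0" if "(\<Sum>i\<in>I. c i *\<^sub>R v i) = 0" for c
  proof
    fix i assume "i \<in> I"
    define c' where "c' i = (if i \<in> I then c i else 0)" for i
    have "matpow N k *v (\<Sum>i\<in>UNIV. c' i *\<^sub>R e i) = (\<Sum>i\<in>UNIV. c' i *\<^sub>R v i)"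
      by (simp add: mv_sum matrix_vector_mult_scaleR v_def)
    also have "\<dots> = (\<Sum>i\<in>I. c i *\<^sub>R v i)"
      by (simp add: c'_def if_distrib[of "\<lambda>t. t *\<^sub>R _"] sum.If_cases Int_def)
    finally have "matpow N k *v (\<Sum>i\<in>UNIV. c' i *\<^sub>R e i) = 0" using that by simp
    then have "c' i = 0" using ker_coeff[OF k] \<open>i \<in> I\<close> by (auto simp: I_def)
    then show "c i = 0" using \<open>i \<in> I\<close> by (simp add: c'_def)
  qed
  have fin: "finite I" by simp
  have eqs: "range (\<lambda>x. matpow N k *v x) = span (v ` I)"
  proof
    show "span (v ` I) \<subseteq> range (\<lambda>x. matpow N k *v x)"
    proof (rule span_minimal)
      show "v ` I \<subseteq> range (\<lambda>x. matpow N k *v x)" by (auto simp: v_def)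
      show "subspace (range (\<lambda>x. matpow N k *v x))"
        using linear_subspace_image[OF matrix_vector_mul_linear[of "matpow N k"] subspace_UNIV] by simp
    qed
    show "range (\<lambda>x. matpow N k *v x) \<subseteq> span (v ` I)"
    proof
      fix y assume "y \<in> range (\<lambda>x. matpow N k *v x)"
      then obtain x where y: "y = matpow N k *v x" by blast
      obtain c where x: "x = (\<Sum>i\<in>UNIV. c i *\<^sub>R e i)" using repr by blast
      have "y = (\<Sum>i\<in>UNIV. c i *\<^sub>R v i)" by (simp add: y x mv_sum matrix_vector_mult_scaleR v_def)
      also have "\<dots> = (\<Sum>i\<in>I. c i *\<^sub>R v i)"
        by (rule sum.mono_neutral_right) (auto simp: I_def v_def Nkill)
      also have "\<dots> \<in> span (v ` I)" by (intro span_sum span_scale span_base) auto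
      finally show "y \<in> span (v ` I)" .
    qed
  qed
  have "dim (span (v ` I)) = card (v ` I)"
    by (rule dim_span_eq_card_independent[OF coeff_indep_independent[OF fin H]])
  also have "\<dots> = card I" by (rule card_image[OF coeff_indep_inj[OF fin H]])
  finally show ?thesis using eqs by (simp add: I_def)
qed

lemma weight_sum:
  "(\<Sum>k = 1..CARD('d) - 1. dim (range (\<lambda>x. matpow N k *v x))) = (\<Sum>i\<in>UNIV. \<omega> i)"
proof -
  have "(\<Sum>k = 1..CARD('d) - 1. dim (range (\<lambda>x. matpow N k *v x)))
      = (\<Sum>k = 1..CARD('d) - 1. card {i. k \<le> \<omega> i})"
    by (intro sum.cong refl rank_eq) auto
  also have "\<dots> = (\<Sum>k = 1..CARD('d) - 1. \<Sum>i\<in>UNIV. if k \<le> \<omega> i then 1 else 0)"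
    by (intro sum.cong refl) (simp add: sum.If_cases)
  also have "\<dots> = (\<Sum>i\<in>UNIV. \<Sum>k = 1..CARD('d) - 1. if k \<le> \<omega> i then 1 else 0)"
    by (rule sum.swap)
  also have "\<dots> = (\<Sum>i\<in>UNIV. \<omega> i)"
  proof (intro sum.cong refl)
    fix i
    have "{k\<in>{1..CARD('d) - 1}. k \<le> \<omega> i} = {1..\<omega> i}" using wlt[of i] by auto
    then show "(\<Sum>k = 1..CARD('d) - 1. if k \<le> \<omega> i then 1 else 0) = \<omega> i"
      by (simp add: sum.If_cases Int_def)
  qed
  finally show ?thesis .
qed

end

context wsetup
begin

lemma L_meas: "\<exists>cP>0. \<forall>n\<ge>1. \<forall>r. measure lebesgue (L n ` cball 0 r) = cP / real n ^ (\<Sum>i\<in>UNIV. \<omega> i) * measure lebesgue (cball (0::real^'d) r)"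
proof -
  obtain g :: "'d wo \<Rightarrow> 'd" where bg: "bij g"
  proof -
    have "card (UNIV :: 'd wo set) = card (UNIV :: 'd set)" using card_wo[where 'a='d] by simp
    then obtain h :: "'d wo \<Rightarrow> 'd" where "bij_betw h UNIV UNIV"
      using finite_same_card_bij[OF finite_class.finite_UNIV finite_class.finite_UNIV] by blast
    then show ?thesis using that by (simp add: bij_betw_def bij_def)
  qed
  define Phi where "Phi = (\<lambda>x::real^'d. (\<chi> i. x $ g i) :: real^'d wo)"
  define Psi where "Psi = (\<lambda>y::real^'d wo. (\<chi> j. y $ inv g j) :: real^'d)"
  have gi1: "g (inv g j) = j" for j using bg by (simp add: bij_def surj_f_inv_f)
  have gi2: "inv g (g i) = i" for i using bg by (simp add: bij_def inv_f_f)
  have PsiPhi: "Psi (Phi x) = x" for x by (simp add: Psi_def Phi_def gi1 vec_eq_iff)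
  have PhiPsi: "Phi (Psi y) = y" for y by (simp add: Psi_def Phi_def gi2 vec_eq_iff)
  have linPhi: "linear Phi" by (auto simp: Phi_def linear_iff vec_eq_iff)
  have linPsi: "linear Psi" by (auto simp: Psi_def linear_iff vec_eq_iff)
  define P where "P = (\<lambda>c::real^'d. \<Sum>i\<in>UNIV. c $ i *\<^sub>R e i)"
  have linP: "linear P" unfolding P_def by (rule lin_comb)
  define Q where "Q = Phi \<circ> P \<circ> Psi"
  have linQ: "linear Q" unfolding Q_def using linPhi linP linPsi by (intro linear_compose)
  have injQ: "inj Q"
  proof (rule injI)
    fix x y assume "Q x = Q y"
    then have "Psi (Phi (P (Psi x))) = Psi (Phi (P (Psi y)))" by (simp add: Q_def)
    then have "P (Psi x - Psi y) = 0" using linear_diff[OF linP] by (simp add: PsiPhi)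
    then have "(\<Sum>i\<in>UNIV. (Psi x - Psi y) $ i *\<^sub>R e i) = 0" by (simp add: P_def)
    then have "(Psi x - Psi y) $ i = 0" for i by (rule coeff0)
    then have "Psi x = Psi y" by (simp add: vec_eq_iff)
    then show "x = y" by (metis PhiPsi)
  qed
  define cP where "cP = \<bar>det (matrix Q)\<bar>"
  have cP: "cP > 0" using det_nz_iff_inj[OF linQ] injQ by (simp add: cP_def)
  show ?thesis
  proof (intro exI[of _ cP] conjI allI impI cP)
    fix n :: nat and r :: real assume n: "1 \<le> n"
    have npos: "real n > 0" using n by simp
    define Dn where "Dn = (\<lambda>x::real^'d. \<chi> j. (1 / real n ^ \<omega> j) * x $ j)"
    have linD: "linear Dn" by (auto simp: Dn_def linear_iff vec_eq_iff algebra_simps add_divide_distrib)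
    have LPD: "L n = P \<circ> Dn" by (rule ext) (simp add: L_def P_def Dn_def)
    have "measure lebesgue (L n ` cball 0 r) = \<bar>det (matrix (Phi \<circ> L n \<circ> Psi))\<bar> * measure lebesgue (cball (0::real^'d) r)"
      using linear_image_measure_finite[OF bg, of "L n" "cball 0 r"] linP linD
      by (simp add: LPD Phi_def Psi_def linear_compose)
    also have "Phi \<circ> L n \<circ> Psi = Q \<circ> (Phi \<circ> Dn \<circ> Psi)"
      by (rule ext) (simp add: LPD Q_def PsiPhi)
    also have "matrix (Q \<circ> (Phi \<circ> Dn \<circ> Psi)) = matrix Q ** matrix (Phi \<circ> Dn \<circ> Psi)"
      using linQ linPhi linD linPsi by (intro matrix_compose linear_compose) auto
    finally have m1: "measure lebesgue (L n ` cball 0 r) = \<bar>det (matrix Q ** matrix (Phi \<circ> Dn \<circ> Psi))\<bar> * measure lebesgue (cball (0::real^'d) r)" .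
    have d1: "det (matrix (Phi \<circ> Dn \<circ> Psi)) = (\<Prod>j\<in>UNIV. 1 / real n ^ \<omega> j)"
      unfolding Phi_def Dn_def Psi_def by (rule det_conj_diag[OF bg])
    have d2: "(\<Prod>j\<in>UNIV. 1 / real n ^ \<omega> j) = 1 / real n ^ (\<Sum>i\<in>UNIV. \<omega> i)"
      by (simp add: prod_dividef power_sum)
    show "measure lebesgue (L n ` cball 0 r) = cP / real n ^ (\<Sum>i\<in>UNIV. \<omega> i) * measure lebesgue (cball (0::real^'d) r)"
      using npos m1 d1 d2 by (simp add: det_mul cP_def abs_mult)
  qed
qed

end

context wsetup
begin

lemma W_mono: "m \<le> n \<Longrightarrow> W_set A n \<subseteq> W_set A m"
  by (auto simp: W_set_def)

lemma W_closed: "closed (W_set A n)"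
proof -
  have "W_set A n = (\<Inter>k\<in>{k. 1 \<le> k \<and> k < n}. {\<xi>. norm (matpow A k *v \<xi>) \<le> 1})"
    by (auto simp: W_set_def)
  moreover have "closed {\<xi>::real^'d. norm (matpow A k *v \<xi>) \<le> 1}" for k
    by (intro closed_Collect_le continuous_on_norm linear_continuous_on continuous_on_const) auto
  ultimately show ?thesis by auto
qed

lemma W2_bounded: "\<exists>B. W_set A 2 \<subseteq> cball 0 B"
proof -
  define F where "F y = (\<Sum>j<CARD('d). matpow N j *v y)" for y :: "real^'d"
  have inv: "F (A *v x) = x" for x
  proof -
    have Ax: "A *v x = x - N *v x"
      by (simp add: matrix_vector_mult_diff_rdistrib matrix_vector_mul_lid)
    have "F (A *v x) = (\<Sum>j<CARD('d). matpow N j *v x - matpow N j *v (N *v x))"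
      by (simp add: F_def Ax matrix_vector_mult_diff_distrib)
    also have "\<dots> = (\<Sum>j<CARD('d). matpow N j *v x - matpow N (Suc j) *v x)"
      by (simp only: matpow_Suc_vec)
    also have "\<dots> = matpow N 0 *v x - matpow N CARD('d) *v x"
      by (rule sum_lessThan_telescope')
    also have "\<dots> = x" by (simp add: nil matrix_vector_mul_lid)
    finally show ?thesis .
  qed
  have "linear F" by (auto simp: F_def linear_iff matrix_vector_right_distrib sum.distrib
        matrix_vector_mult_scaleR scaleR_sum_right)
  then have "bounded_linear F" using linear_linear by blast
  then obtain B where Bpos: "B > 0" and B: "\<And>y. norm (F y) \<le> norm y * B" using bounded_linear.pos_bounded by blast
  show ?thesis
  proof (intro exI[of _ B] subsetI)
    fix x assume "x \<in> W_set A 2"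
    then have "norm (matpow A 1 *v x) \<le> 1" by (auto simp: W_set_def)
    then have n1: "norm (A *v x) \<le> 1" by (simp add: matrix_vector_mul_lid)
    have "norm x = norm (F (A *v x))" by (simp add: inv)
    also have "\<dots> \<le> norm (A *v x) * B" by (rule B)
    also have "\<dots> \<le> 1 * B" using n1 Bpos by (intro mult_right_mono) auto
    finally show "x \<in> cball 0 B" by simp
  qed
qed

lemma W_compact: "n \<ge> 2 \<Longrightarrow> compact (W_set A n)"
proof -
  assume n: "n \<ge> 2"
  obtain B where B: "W_set A 2 \<subseteq> cball 0 B" using W2_bounded by blast
  have "bounded (W_set A n)" using W_mono[OF n] B bounded_cball bounded_subset by blast
  then show ?thesis using W_closed compact_eq_bounded_closed by blast
qed

lemma L_compact: "compact (L n ` cball 0 r)"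
proof -
  have "linear (L n)" unfolding L_def
    by (auto simp: linear_iff sum.distrib scaleR_add_left scaleR_sum_right add_divide_distrib)
  then show ?thesis
    by (intro compact_continuous_image linear_continuous_on) (auto simp: linear_linear[symmetric])
qed

lemma main_bounds:
  "\<exists>C C'. C > 0 \<and> C' > 0 \<and> (\<forall>n::nat. n \<ge> 2 \<longrightarrow>
     C * real n powr (- real (\<Sum>i\<in>UNIV. \<omega> i)) \<le> measure lebesgue (W_set A n) \<and>
     measure lebesgue (W_set A n) \<le> C' * real n powr (- real (\<Sum>i\<in>UNIV. \<omega> i)))"
proof -
  define p where "p = (\<Sum>i\<in>UNIV. \<omega> i)"
  obtain c0 where c0: "c0 > 0" and E: "\<And>n \<eta>. n \<ge> 1 \<Longrightarrow> norm \<eta> \<le> c0 \<Longrightarrow> L n \<eta> \<in> W_set A n"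
    using easy by blast
  obtain C0 n0 where n01: "n0 \<ge> 1" and Hd: "\<And>n \<xi>. n \<ge> n0 \<Longrightarrow> \<xi> \<in> W_set A n \<Longrightarrow> \<exists>\<eta>. norm \<eta> \<le> C0 \<and> \<xi> = L n \<eta>"
    using hard by blast
  obtain cP where cP: "cP > 0" and LM: "\<And>n r. n \<ge> 1 \<Longrightarrow> measure lebesgue (L n ` cball 0 r) = cP / real n ^ p * measure lebesgue (cball (0::real^'d) r)"
    using L_meas unfolding p_def by blast
  define n1 where "n1 = max n0 2"
  define a where "a = cP * measure lebesgue (cball (0::real^'d) c0)"
  define b where "b = cP * measure lebesgue (cball (0::real^'d) C0)"
  have a0: "a > 0" using cP c0 by (simp add: a_def)
  have b0: "b \<ge> 0" using cP by (simp add: b_def)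
  have pw: "real n powr (- real p) = 1 / real n ^ p" if "n \<ge> 1" for n :: nat
    using that by (simp add: powr_minus powr_realpow divide_inverse)
  have big: "a * real n powr (- real p) \<le> measure lebesgue (W_set A n) \<and>
             measure lebesgue (W_set A n) \<le> b * real n powr (- real p)" if n: "n \<ge> n1" for n
  proof -
    have n2: "n \<ge> 2" "n \<ge> 1" "n \<ge> n0" using n n01 by (auto simp: n1_def)
    have s1: "L n ` cball 0 c0 \<subseteq> W_set A n" using E[OF n2(2)] by auto
    have s2: "W_set A n \<subseteq> L n ` cball 0 C0"
    proof
      fix \<xi> assume "\<xi> \<in> W_set A n"
      then obtain \<eta> where "norm \<eta> \<le> C0" "\<xi> = L n \<eta>" using Hd[OF n2(3)] by blast
      then show "\<xi> \<in> L n ` cball 0 C0" by auto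
    qed
    have m1: "measure lebesgue (L n ` cball 0 c0) \<le> measure lebesgue (W_set A n)"
      by (rule measure_mono_fmeasurable[OF s1 fmeasurableD[OF lmeasurable_compact[OF L_compact]]
            lmeasurable_compact[OF W_compact[OF n2(1)]]])
    have m2: "measure lebesgue (W_set A n) \<le> measure lebesgue (L n ` cball 0 C0)"
      by (rule measure_mono_fmeasurable[OF s2 fmeasurableD[OF lmeasurable_compact[OF W_compact[OF n2(1)]]]
            lmeasurable_compact[OF L_compact]])
    show ?thesis using m1 m2 LM[OF n2(2)] pw[OF n2(2)] by (simp add: a_def b_def)
  qed
  define W2 where "W2 = measure lebesgue (W_set A 2)"
  have W20: "W2 \<ge> 0" by (simp add: W2_def)
  define C where "C = a * real n1 powr (- real p)"
  define C' where "C' = b + W2 * real n1 powr (real p) + 1"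
  have n1pos: "real n1 > 0" by (simp add: n1_def)
  have Cpos: "C > 0" using a0 n1pos by (simp add: C_def)
  have C'pos: "C' > 0" using b0 W20 n1pos by (simp add: C'_def add_nonneg_pos)
  have allb: "\<forall>n::nat. n \<ge> 2 \<longrightarrow> C * real n powr (- real p) \<le> measure lebesgue (W_set A n) \<and>
          measure lebesgue (W_set A n) \<le> C' * real n powr (- real p)"
  proof (intro allI impI)
    fix n :: nat assume n2: "2 \<le> n"
    have npos: "real n > 0" using n2 by simp
    have q1: "real n powr (- real p) \<le> 1"
    proof -
      have "1 \<le> real n ^ p" using n2 by (intro one_le_power) simp
      then show ?thesis using pw[of n] n2 by (auto simp: divide_le_eq_1)
    qed
    have q0: "real n powr (- real p) \<ge> 0" by simp
    have r1: "real n1 powr (- real p) \<le> 1"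
    proof -
      have n11: "n1 \<ge> 1" by (simp add: n1_def)
      have "1 \<le> real n1 ^ p" using n11 by (intro one_le_power) simp
      then show ?thesis using pw[OF n11] by (auto simp: divide_le_eq_1)
    qed
    show "C * real n powr (- real p) \<le> measure lebesgue (W_set A n) \<and>
          measure lebesgue (W_set A n) \<le> C' * real n powr (- real p)"
    proof (cases "n \<ge> n1")
      case True
      have "C * real n powr (- real p) \<le> a * real n powr (- real p)"
        using a0 r1 q0 by (simp add: C_def mult_right_mono mult_left_le)
      moreover have "b * real n powr (- real p) \<le> C' * real n powr (- real p)"
        using q0 W20 n1pos by (intro mult_right_mono) (auto simp: C'_def)
      ultimately show ?thesis using big[OF True] by linarith
    next
      case False
      have nn1: "n \<le> n1" using False by simp
      have wn1: "measure lebesgue (W_set A n1) \<le> measure lebesgue (W_set A n)"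
        by (rule measure_mono_fmeasurable[OF W_mono[OF nn1] fmeasurableD[OF lmeasurable_compact[OF W_compact]]
              lmeasurable_compact[OF W_compact[OF n2]]]) (simp add: n1_def)
      have wn2: "measure lebesgue (W_set A n) \<le> W2" unfolding W2_def
        by (rule measure_mono_fmeasurable[OF W_mono[OF n2] fmeasurableD[OF lmeasurable_compact[OF W_compact[OF n2]]]
              lmeasurable_compact[OF W_compact]]) simp
      have "C * real n powr (- real p) \<le> C" using q1 q0 a0 n1pos by (simp add: C_def mult_left_le)
      also have "\<dots> \<le> measure lebesgue (W_set A n1)" using big[of n1] a0 by (simp add: C_def)
      also have "\<dots> \<le> measure lebesgue (W_set A n)" by (rule wn1)
      finally have lo: "C * real n powr (- real p) \<le> measure lebesgue (W_set A n)" .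
      have "1 \<le> real n1 powr (real p) * real n powr (- real p)"
      proof -
        have pd: "(real n1 / real n) powr real p = real n1 powr real p / real n powr real p"
          by (rule powr_divide)
        have "real n1 powr (real p) * real n powr (- real p) = (real n1 / real n) powr (real p)"
          unfolding pd by (simp add: powr_minus divide_inverse)
        also have "\<dots> \<ge> 1" using nn1 npos by (intro ge_one_powr_ge_zero) (auto simp: field_simps)
        finally show ?thesis .
      qed
      then have "W2 \<le> W2 * (real n1 powr (real p) * real n powr (- real p))"
        using W20 by (simp add: mult_le_cancel_left1)
      also have "\<dots> \<le> C' * real n powr (- real p)"
        using q0 b0 W20 n1pos by (simp add: C'_def algebra_simps mult_nonneg_nonneg)
      finally have hi: "measure lebesgue (W_set A n) \<le> C' * real n powr (- real p)" using wn2 by linarith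
      show ?thesis using lo hi by simp
    qed
  qed
  show ?thesis unfolding p_def[symmetric] using Cpos C'pos allb by blast
qed

end

theorem proposition4p5:
  fixes A :: "real^'d^'d"
  assumes unipotent: "matpow (mat 1 - A) CARD('d) = 0"
  defines "p \<equiv> (\<Sum>k = 1..CARD('d) - 1. dim (range (\<lambda>x. matpow (mat 1 - A) k *v x)))"
  shows "\<exists>C C'. C > 0 \<and> C' > 0 \<and>
           (\<forall>n::nat. n \<ge> 2 \<longrightarrow>
              C * real n powr (- real p) \<le> measure lebesgue (W_set A n) \<and>
              measure lebesgue (W_set A n) \<le> C' * real n powr (- real p))"
proof -
  obtain e :: "'d \<Rightarrow> real^'d" and \<omega> :: "'d \<Rightarrow> nat" where
    H: "inj e" "independent (range e)" "span (range e) = UNIV"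
       "\<forall>i. matpow (mat 1 - A) (Suc (\<omega> i)) *v e i = 0 \<and> \<omega> i < CARD('d)"
       "\<forall>j\<le>CARD('d). {x. matpow (mat 1 - A) j *v x = 0} \<subseteq> span (e ` {i. \<omega> i < j})"
    using adapted_basis[OF unipotent] by blast
  interpret wsetup A e \<omega>
    using unipotent H by unfold_locales auto
  have "p = (\<Sum>i\<in>UNIV. \<omega> i)" unfolding p_def by (rule weight_sum)
  then show ?thesis using main_bounds by simp
qed

end
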